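(* Let $\theta\in\mathbb{R}$, let $\mathcal{A}_\theta$ be the smooth noncommutative torus and let $\tau\in\mathbb{C}$ with $\Im\tau>0$. For every projection $p\in\mathcal{A}_\theta$ (i.e. $p=p^2=p^*$), define $$S_{(\tau)}(p)=\frac{1}{2\pi}\int \sqrt{\det g}\; g^{\mu\nu}\,\partial_\mu p\,\partial_\nu p ,\qquad \psi(p)=-\frac{1}{2\pi i}\int p\big[\partial_1(p)\partial_2(p)-\partial_2(p)\partial_1(p)\big].$$ Then $$S_{(\tau)}(p)\ \geq\ 2\,|\psi(p)| .$$ Moreover, equality $S_{(\tau)}(p)=2|\psi(p)|$ holds whenever $p$ satisfies one of the equations $\bar{\partial}_{(\tau)}(p)\,p=0$, $p\,\partial_{(\tau)}(p)=0$, $\partial_{(\tau)}(p)\,p=0$, $p\,\bar{\partial}_{(\tau)}(p)=0$.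
   Context: $\mathcal{A}_\theta$ is the unital $*$-algebra of series $a=\sum_{(m,n)\in\mathbb{Z}^2}a_{mn}U_1^mU_2^n$ with $(a_{mn})$ a complex Schwartz (rapidly decreasing) sequence on $\mathbb{Z}^2$, where $U_1,U_2$ are unitaries with $U_2U_1=e^{2\pi i\theta}U_1U_2$. The integral $\int:\mathcal{A}_\theta\to\mathbb{C}$ denotes the normalized positive faithful trace $\int\sum a_{mn}U_1^mU_2^n:=a_{00}$. The derivations $\partial_1,\partial_2$ of $\mathcal{A}_\theta$ are defined by $\partial_\mu(U_\nu)=2\pi i\,\delta_\mu^\nu U_\nu$ ($\mu,\nu=1,2$), extended by the Leibniz rule and linearity. The metric associated with $\tau$ is $g=(g_{\mu\nu})=\begin{pmatrix}1&\Re\tau\\ \Re\tau&|\tau|^2\end{pmatrix}$, with inverse $(g^{\mu\nu})=\frac{1}{(\Im\tau)^2}\begin{pmatrix}|\tau|^2&-\Re\tau\\-\Re\tau&1\end{pmatrix}$ and $\sqrt{\det g}=\Im\tau$; repeated indices are summed over $1,2$. The derivations $\partial_{(\tau)}=\frac{1}{\tau-\bar\tau}(-\bar\tau\partial_1+\partial_2)$ and $\bar\partial_{(\tau)}=\frac{1}{\tau-\bar\tau}(\tau\partial_1-\partial_2)$. *)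

theory Defs
  imports "HOL-Analysis.Analysis"
begin

text \<open>An element a = sum a_mn U1^m U2^n of the smooth noncommutative torus is
represented by its coefficient function (m,n) -> a_mn.\<close>

type_synonym nct = "int \<times> int \<Rightarrow> complex"

definition nct_schwartz :: "nct \<Rightarrow> bool" where
  "nct_schwartz a \<longleftrightarrow>
     (\<forall>k::nat. \<exists>C::real. \<forall>m n. (1 + real_of_int \<bar>m\<bar> + real_of_int \<bar>n\<bar>) ^ k * cmod (a (m, n)) \<le> C)"

text \<open>Product: U1^m U2^n U1^p U2^q = e^{2 pi i theta n p} U1^(m+p) U2^(n+q).\<close>
definition nct_mult :: "real \<Rightarrow> nct \<Rightarrow> nct \<Rightarrow> nct" where
  "nct_mult \<theta> a b = (\<lambda>(r, s). \<Sum>\<^sub>\<infinity>(m, n)\<in>UNIV.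
      a (m, n) * b (r - m, s - n) * exp (2 * pi * \<i> * of_real \<theta> * of_int n * of_int (r - m)))"

text \<open>Adjoint: (U1^m U2^n)^* = U2^{-n} U1^{-m} = e^{2 pi i theta m n} U1^{-m} U2^{-n}.\<close>
definition nct_star :: "real \<Rightarrow> nct \<Rightarrow> nct" where
  "nct_star \<theta> a = (\<lambda>(m, n). cnj (a (- m, - n)) * exp (2 * pi * \<i> * of_real \<theta> * of_int m * of_int n))"

definition nct_d1 :: "nct \<Rightarrow> nct" where
  "nct_d1 a = (\<lambda>(m, n). 2 * pi * \<i> * of_int m * a (m, n))"

definition nct_d2 :: "nct \<Rightarrow> nct" where
  "nct_d2 a = (\<lambda>(m, n). 2 * pi * \<i> * of_int n * a (m, n))"

definition nct_deriv :: "nat \<Rightarrow> nct \<Rightarrow> nct" where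
  "nct_deriv \<mu> = (if \<mu> = 1 then nct_d1 else nct_d2)"

definition nct_int :: "nct \<Rightarrow> complex" where
  "nct_int a = a (0, 0)"

definition nct_projection :: "real \<Rightarrow> nct \<Rightarrow> bool" where
  "nct_projection \<theta> p \<longleftrightarrow> nct_schwartz p \<and> p = nct_mult \<theta> p p \<and> p = nct_star \<theta> p"

definition metric :: "complex \<Rightarrow> nat \<Rightarrow> nat \<Rightarrow> real" where
  "metric \<tau> \<mu> \<nu> =
     (if \<mu> = 1 \<and> \<nu> = 1 then 1
      else if \<mu> = 2 \<and> \<nu> = 2 then (cmod \<tau>)\<^sup>2
      else Re \<tau>)"

definition metric_inv :: "complex \<Rightarrow> nat \<Rightarrow> nat \<Rightarrow> real" where
  "metric_inv \<tau> \<mu> \<nu> = (1 / (Im \<tau>)\<^sup>2) *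
     (if \<mu> = 1 \<and> \<nu> = 1 then (cmod \<tau>)\<^sup>2
      else if \<mu> = 2 \<and> \<nu> = 2 then 1
      else - Re \<tau>)"

definition sqrt_det_metric :: "complex \<Rightarrow> real" where
  "sqrt_det_metric \<tau> = sqrt (metric \<tau> 1 1 * metric \<tau> 2 2 - metric \<tau> 1 2 * metric \<tau> 2 1)"

definition S_tau :: "complex \<Rightarrow> real \<Rightarrow> nct \<Rightarrow> complex" where
  "S_tau \<tau> \<theta> p = (1 / (2 * pi)) *
     (\<Sum>\<mu>\<in>{1,2}. \<Sum>\<nu>\<in>{1,2}. of_real (sqrt_det_metric \<tau> * metric_inv \<tau> \<mu> \<nu>) *
        nct_int (nct_mult \<theta> (nct_deriv \<mu> p) (nct_deriv \<nu> p)))"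

definition psi :: "real \<Rightarrow> nct \<Rightarrow> complex" where
  "psi \<theta> p = - (1 / (2 * pi * \<i>)) *
     nct_int (nct_mult \<theta> p (\<lambda>k. nct_mult \<theta> (nct_d1 p) (nct_d2 p) k
                               - nct_mult \<theta> (nct_d2 p) (nct_d1 p) k))"

definition del_tau :: "complex \<Rightarrow> nct \<Rightarrow> nct" where
  "del_tau \<tau> a = (\<lambda>k. (1 / (\<tau> - cnj \<tau>)) * (- cnj \<tau> * nct_d1 a k + nct_d2 a k))"

definition delbar_tau :: "complex \<Rightarrow> nct \<Rightarrow> nct" where
  "delbar_tau \<tau> a = (\<lambda>k. (1 / (\<tau> - cnj \<tau>)) * (\<tau> * nct_d1 a k - nct_d2 a k))"

end

theory Submission
  imports Defs
begin
definition EE :: "real \<Rightarrow> int \<Rightarrow> complex" where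
  "EE \<theta> z = exp (2 * pi * \<i> * of_real \<theta> * of_int z)"

lemma EE_add: "EE \<theta> (a + b) = EE \<theta> a * EE \<theta> b"
  unfolding EE_def by (simp add: exp_add[symmetric] algebra_simps)

lemma EE_norm[simp]: "norm (EE \<theta> z) = 1"
  unfolding EE_def by (simp add: norm_exp_eq_Re)

lemma EE_cnj: "cnj (EE \<theta> z) = EE \<theta> (- z)"
  unfolding EE_def by (simp add: exp_cnj)

lemma EE_eq2: "a + b = c + d \<Longrightarrow> EE \<theta> a * EE \<theta> b = EE \<theta> c * EE \<theta> d"
  by (metis EE_add)

lemma EE_0[simp]: "EE \<theta> 0 = 1" by (simp add: EE_def)

lemma mult_alt: "nct_mult \<theta> a b k = (\<Sum>\<^sub>\<infinity>m. a m * b (k - m) * EE \<theta> (snd m * (fst k - fst m)))"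
  by (cases k) (simp add: nct_mult_def EE_def case_prod_unfold mult.assoc minus_prod_def)

lemma star_alt: "nct_star \<theta> a m = cnj (a (- m)) * EE \<theta> (fst m * snd m)"
  by (cases m) (simp add: nct_star_def EE_def mult.assoc)

lemma d1_alt: "nct_d1 a m = 2 * pi * \<i> * of_int (fst m) * a m"
  by (cases m) (simp add: nct_d1_def)

lemma d2_alt: "nct_d2 a m = 2 * pi * \<i> * of_int (snd m) * a m"
  by (cases m) (simp add: nct_d2_def)

abbreviation l1 :: "nct \<Rightarrow> bool" where "l1 a \<equiv> (\<lambda>k. norm (a k)) summable_on UNIV"

lemma l1_bound: assumes "l1 a" shows "norm (a k) \<le> (\<Sum>\<^sub>\<infinity>x. norm (a x))"
proof -
  have "(\<Sum>\<^sub>\<infinity>x\<in>{k}. norm (a x)) \<le> (\<Sum>\<^sub>\<infinity>x. norm (a x))"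
    by (rule infsum_mono_neutral) (use assms in auto)
  then show ?thesis by simp
qed

lemma l1_bounded: assumes "l1 a" obtains B where "\<And>k. norm (a k) \<le> B"
  using l1_bound[OF assms] by blast

lemma l1_lin: assumes "l1 a" "l1 b" shows "l1 (\<lambda>k. x * a k + y * b k)"
proof -
  have "(\<lambda>k. x * a k + y * b k) summable_on UNIV"
    using assms by (intro summable_on_add summable_on_cmult_right)
       (auto simp: summable_on_iff_abs_summable_on_complex)
  then show ?thesis by (simp add: summable_on_iff_abs_summable_on_complex)
qed

lemma inner_summable:
  assumes "l1 a" "\<And>k. norm (b k) \<le> B"
  shows "(\<lambda>m. a m * b (h m) * EE \<theta> (g m)) summable_on UNIV"
proof -
  have "(\<lambda>m. norm (a m * b (h m) * EE \<theta> (g m))) summable_on UNIV"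
  proof (rule Infinite_Sum.abs_summable_on_comparison_test)
    show "(\<lambda>m. norm (B * a m)) summable_on UNIV"
      using assms(1) by (simp add: norm_mult summable_on_cmult_right)
    fix m
    have "norm (a m * b (h m) * EE \<theta> (g m)) = norm (a m) * norm (b (h m))"
      by (simp add: norm_mult)
    also have "\<dots> \<le> norm (a m) * B" by (rule mult_left_mono) (use assms(2) in auto)
    also have "\<dots> \<le> norm (B * a m)"
      by (simp add: norm_mult mult.commute mult_right_mono)
    finally show "norm (a m * b (h m) * EE \<theta> (g m)) \<le> norm (B * a m)" .
  qed
  then show ?thesis by (simp add: summable_on_iff_abs_summable_on_complex)
qed

lemma inner_summable':
  assumes "\<And>k. norm (a k) \<le> B" "l1 b"
  shows "(\<lambda>m. a m * b (k - m) * EE \<theta> (g m)) summable_on UNIV"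
proof -
  have bij: "bij_betw (\<lambda>m. k - m) UNIV UNIV"
    by (rule bij_betwI[where g="\<lambda>m. k - m"]) auto
  have "(\<lambda>m. b m * a (k - m) * EE \<theta> (g (k - m))) summable_on UNIV"
    by (rule inner_summable[OF assms(2) assms(1)])
  then have "(\<lambda>m. b (k - m) * a (k - (k - m)) * EE \<theta> (g (k - (k - m)))) summable_on UNIV"
    using summable_on_reindex_bij_betw[OF bij, where f="\<lambda>m. b m * a (k - m) * EE \<theta> (g (k - m))"]
    by simp
  then show ?thesis by (simp add: mult.commute mult.left_commute)
qed

lemma prod_l1:
  assumes "l1 a" "l1 b"
  shows "(\<lambda>(x,y). norm (a x) * norm (b y)) summable_on (UNIV :: ((int\<times>int)\<times>(int\<times>int)) set)"
proof -
  let ?f = "\<lambda>(x,y). a x * b y"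
  have "(\<lambda>z. norm (?f z)) summable_on Sigma UNIV (\<lambda>_. UNIV)"
  proof (subst Infinite_Sum.abs_summable_on_Sigma_iff, intro conjI ballI)
    fix x show "(\<lambda>y. norm (?f (x, y))) summable_on UNIV"
      using assms(2) by (simp add: norm_mult summable_on_cmult_right)
  next
    have "(\<lambda>x. norm (a x) * (\<Sum>\<^sub>\<infinity>y. norm (b y))) summable_on UNIV"
      using assms(1) by (simp add: summable_on_cmult_left)
    moreover have "(\<Sum>\<^sub>\<infinity>y. norm (b y)) \<ge> 0" by (rule infsum_nonneg) auto
    ultimately show "(\<lambda>x. norm (\<Sum>\<^sub>\<infinity>y\<in>UNIV. norm (?f (x, y)))) summable_on UNIV"
      by (simp add: norm_mult infsum_cmult_right' abs_mult)
  qed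
  then show ?thesis by (simp add: norm_mult case_prod_unfold)
qed

lemma bij_conv: "bij_betw (\<lambda>(q, m). (m, q - m)) (UNIV :: (('a::ab_group_add) \<times> 'a) set) UNIV"
  by (rule bij_betwI[where g="\<lambda>(m, j). (m + j, m)"]) auto

lemma bij_shift: "bij_betw (\<lambda>m. r + m) (UNIV :: ('a::ab_group_add) set) UNIV"
  by (rule bij_betwI[where g="\<lambda>m. m - r"]) auto

lemma bij_neg: "bij_betw (\<lambda>m. - m) (UNIV :: ('a::ab_group_add) set) UNIV"
  by (rule bij_betwI[where g="\<lambda>m. - m"]) auto

lemma conv_l1:
  assumes "l1 a" "l1 b"
  shows "(\<lambda>(k,m). norm (a m) * norm (b (k - m))) summable_on (UNIV :: ((int\<times>int)\<times>(int\<times>int)) set)"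
proof -
  have "(\<lambda>x. (\<lambda>(x,y). norm (a x) * norm (b y)) ((\<lambda>(q, m). (m, q - m)) x)) summable_on UNIV"
    using summable_on_reindex_bij_betw[OF bij_conv] prod_l1[OF assms] by blast
  then show ?thesis by (simp add: case_prod_unfold)
qed

lemma mult_l1:
  assumes "l1 a" "l1 b"
  shows "l1 (nct_mult \<theta> a b)"
proof -
  have "(\<lambda>k. \<Sum>\<^sub>\<infinity>m. norm (a m) * norm (b (k - m))) summable_on UNIV"
    using summable_on_Sigma_banach[where f="\<lambda>k m. norm (a m) * norm (b (k - m))" and A=UNIV and B="\<lambda>_. UNIV"]
      conv_l1[OF assms] by simp
  then show ?thesis
  proof (rule summable_on_comparison_test)
    fix k
    obtain B where B: "\<And>k. norm (b k) \<le> B" using l1_bounded[OF assms(2)] by blast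
    have s: "(\<lambda>m. a m * b (k - m) * EE \<theta> (snd m * (fst k - fst m))) summable_on UNIV"
      by (rule inner_summable[OF assms(1) B])
    have "norm (nct_mult \<theta> a b k) \<le> (\<Sum>\<^sub>\<infinity>m. norm (a m * b (k - m) * EE \<theta> (snd m * (fst k - fst m))))"
      unfolding mult_alt by (rule norm_infsum_bound) (use s in \<open>simp add: summable_on_iff_abs_summable_on_complex\<close>)
    then show "norm (nct_mult \<theta> a b k) \<le> (\<Sum>\<^sub>\<infinity>m. norm (a m) * norm (b (k - m)))"
      by (simp add: norm_mult)
  qed auto
qed

lemma mult_lin_left:
  assumes "l1 a" "l1 b" "l1 c"
  shows "nct_mult \<theta> (\<lambda>k. x * a k + y * b k) c = (\<lambda>r. x * nct_mult \<theta> a c r + y * nct_mult \<theta> b c r)"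
proof
  fix r
  obtain B where B: "\<And>k. norm (c k) \<le> B" using l1_bounded[OF assms(3)] by blast
  have s1: "(\<lambda>m. a m * c (r - m) * EE \<theta> (snd m * (fst r - fst m))) summable_on UNIV"
    by (rule inner_summable[OF assms(1) B])
  have s2: "(\<lambda>m. b m * c (r - m) * EE \<theta> (snd m * (fst r - fst m))) summable_on UNIV"
    by (rule inner_summable[OF assms(2) B])
  have "nct_mult \<theta> (\<lambda>k. x * a k + y * b k) c r =
     (\<Sum>\<^sub>\<infinity>m. x * (a m * c (r - m) * EE \<theta> (snd m * (fst r - fst m))) + y * (b m * c (r - m) * EE \<theta> (snd m * (fst r - fst m))))"
    unfolding mult_alt by (rule infsum_cong) (simp add: algebra_simps)
  also have "\<dots> = x * nct_mult \<theta> a c r + y * nct_mult \<theta> b c r"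
    unfolding mult_alt
    by (subst infsum_add) (use s1 s2 in \<open>auto intro: summable_on_cmult_right simp: infsum_cmult_right'\<close>)
  finally show "nct_mult \<theta> (\<lambda>k. x * a k + y * b k) c r = x * nct_mult \<theta> a c r + y * nct_mult \<theta> b c r" .
qed

lemma mult_lin_right:
  assumes "l1 a" "l1 b" "l1 c"
  shows "nct_mult \<theta> c (\<lambda>k. x * a k + y * b k) = (\<lambda>r. x * nct_mult \<theta> c a r + y * nct_mult \<theta> c b r)"
proof
  fix r
  obtain A where A: "\<And>k. norm (a k) \<le> A" using l1_bounded[OF assms(1)] by blast
  obtain B where B: "\<And>k. norm (b k) \<le> B" using l1_bounded[OF assms(2)] by blast
  have s1: "(\<lambda>m. c m * a (r - m) * EE \<theta> (snd m * (fst r - fst m))) summable_on UNIV"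
    by (rule inner_summable[OF assms(3) A])
  have s2: "(\<lambda>m. c m * b (r - m) * EE \<theta> (snd m * (fst r - fst m))) summable_on UNIV"
    by (rule inner_summable[OF assms(3) B])
  have "nct_mult \<theta> c (\<lambda>k. x * a k + y * b k) r =
     (\<Sum>\<^sub>\<infinity>m. x * (c m * a (r - m) * EE \<theta> (snd m * (fst r - fst m))) + y * (c m * b (r - m) * EE \<theta> (snd m * (fst r - fst m))))"
    unfolding mult_alt by (rule infsum_cong) (simp add: algebra_simps)
  also have "\<dots> = x * nct_mult \<theta> c a r + y * nct_mult \<theta> c b r"
    unfolding mult_alt
    by (subst infsum_add) (use s1 s2 in \<open>auto intro: summable_on_cmult_right simp: infsum_cmult_right'\<close>)
  finally show "nct_mult \<theta> c (\<lambda>k. x * a k + y * b k) r = x * nct_mult \<theta> c a r + y * nct_mult \<theta> c b r" .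
qed

lemma mult_bilin:
  assumes "l1 a" "l1 b"
  shows "nct_mult \<theta> (\<lambda>k. x1 * a k + y1 * b k) (\<lambda>k. x2 * a k + y2 * b k) =
    (\<lambda>r. x1 * x2 * nct_mult \<theta> a a r + x1 * y2 * nct_mult \<theta> a b r + y1 * x2 * nct_mult \<theta> b a r + y1 * y2 * nct_mult \<theta> b b r)"
  using assms
  by (simp add: mult_lin_left mult_lin_right l1_lin algebra_simps)

lemma mult_zero_left[simp]: "nct_mult \<theta> (\<lambda>_. 0) b = (\<lambda>_. 0)"
  by (rule ext) (simp add: mult_alt)

lemma mult_zero_right[simp]: "nct_mult \<theta> a (\<lambda>_. 0) = (\<lambda>_. 0)"
  by (rule ext) (simp add: mult_alt)

lemma leibniz_d1:
  assumes "l1 a" "l1 b" "l1 (nct_d1 a)" "l1 (nct_d1 b)"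
  shows "nct_d1 (nct_mult \<theta> a b) = (\<lambda>k. nct_mult \<theta> (nct_d1 a) b k + nct_mult \<theta> a (nct_d1 b) k)"
proof
  fix k
  obtain B where B: "\<And>k. norm (b k) \<le> B" using l1_bounded[OF assms(2)] by blast
  obtain B' where B': "\<And>k. norm (nct_d1 b k) \<le> B'" using l1_bounded[OF assms(4)] by blast
  have s1: "(\<lambda>m. nct_d1 a m * b (k - m) * EE \<theta> (snd m * (fst k - fst m))) summable_on UNIV"
    by (rule inner_summable[OF assms(3) B])
  have s2: "(\<lambda>m. a m * nct_d1 b (k - m) * EE \<theta> (snd m * (fst k - fst m))) summable_on UNIV"
    by (rule inner_summable[OF assms(1) B'])
  have "nct_d1 (nct_mult \<theta> a b) k = (\<Sum>\<^sub>\<infinity>m. 2 * pi * \<i> * of_int (fst k) * (a m * b (k - m) * EE \<theta> (snd m * (fst k - fst m))))"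
    by (simp add: d1_alt mult_alt infsum_cmult_right')
  also have "\<dots> = (\<Sum>\<^sub>\<infinity>m. nct_d1 a m * b (k - m) * EE \<theta> (snd m * (fst k - fst m)) + a m * nct_d1 b (k - m) * EE \<theta> (snd m * (fst k - fst m)))"
    by (rule infsum_cong) (simp add: d1_alt algebra_simps)
  also have "\<dots> = nct_mult \<theta> (nct_d1 a) b k + nct_mult \<theta> a (nct_d1 b) k"
    unfolding mult_alt by (rule infsum_add[OF s1 s2])
  finally show "nct_d1 (nct_mult \<theta> a b) k = nct_mult \<theta> (nct_d1 a) b k + nct_mult \<theta> a (nct_d1 b) k" .
qed

lemma leibniz_d2:
  assumes "l1 a" "l1 b" "l1 (nct_d2 a)" "l1 (nct_d2 b)"
  shows "nct_d2 (nct_mult \<theta> a b) = (\<lambda>k. nct_mult \<theta> (nct_d2 a) b k + nct_mult \<theta> a (nct_d2 b) k)"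
proof
  fix k
  obtain B where B: "\<And>k. norm (b k) \<le> B" using l1_bounded[OF assms(2)] by blast
  obtain B' where B': "\<And>k. norm (nct_d2 b k) \<le> B'" using l1_bounded[OF assms(4)] by blast
  have s1: "(\<lambda>m. nct_d2 a m * b (k - m) * EE \<theta> (snd m * (fst k - fst m))) summable_on UNIV"
    by (rule inner_summable[OF assms(3) B])
  have s2: "(\<lambda>m. a m * nct_d2 b (k - m) * EE \<theta> (snd m * (fst k - fst m))) summable_on UNIV"
    by (rule inner_summable[OF assms(1) B'])
  have "nct_d2 (nct_mult \<theta> a b) k = (\<Sum>\<^sub>\<infinity>m. 2 * pi * \<i> * of_int (snd k) * (a m * b (k - m) * EE \<theta> (snd m * (fst k - fst m))))"
    by (simp add: d2_alt mult_alt infsum_cmult_right')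
  also have "\<dots> = (\<Sum>\<^sub>\<infinity>m. nct_d2 a m * b (k - m) * EE \<theta> (snd m * (fst k - fst m)) + a m * nct_d2 b (k - m) * EE \<theta> (snd m * (fst k - fst m)))"
    by (rule infsum_cong) (simp add: d2_alt algebra_simps)
  also have "\<dots> = nct_mult \<theta> (nct_d2 a) b k + nct_mult \<theta> a (nct_d2 b) k"
    unfolding mult_alt by (rule infsum_add[OF s1 s2])
  finally show "nct_d2 (nct_mult \<theta> a b) k = nct_mult \<theta> (nct_d2 a) b k + nct_mult \<theta> a (nct_d2 b) k" .
qed

lemma trace_comm: "nct_int (nct_mult \<theta> a b) = nct_int (nct_mult \<theta> b a)"
proof -
  have "nct_int (nct_mult \<theta> b a) = (\<Sum>\<^sub>\<infinity>m. b m * a (- m) * EE \<theta> (snd m * (- fst m)))"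
    by (simp add: nct_int_def mult_alt zero_prod_def[symmetric])
  also have "\<dots> = (\<Sum>\<^sub>\<infinity>m. b (- m) * a (- (- m)) * EE \<theta> (snd (- m) * (- fst (- m))))"
    by (rule infsum_reindex_bij_betw[OF bij_neg, symmetric])
  also have "\<dots> = (\<Sum>\<^sub>\<infinity>m. a m * b (- m) * EE \<theta> (snd m * (- fst m)))"
    by (rule infsum_cong) (simp add: algebra_simps)
  also have "\<dots> = nct_int (nct_mult \<theta> a b)"
    by (simp add: nct_int_def mult_alt zero_prod_def[symmetric])
  finally show ?thesis ..
qed

lemma star_pos: "nct_int (nct_mult \<theta> (nct_star \<theta> z) z) \<ge> 0"
proof -
  have "nct_int (nct_mult \<theta> (nct_star \<theta> z) z) = (\<Sum>\<^sub>\<infinity>m. complex_of_real (norm (z (- m)) ^ 2))"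
    unfolding nct_int_def zero_prod_def[symmetric] mult_alt
  proof (rule infsum_cong)
    fix m :: "int \<times> int"
    have "EE \<theta> (fst m * snd m) * EE \<theta> (snd m * (fst (0::int\<times>int) - fst m)) = EE \<theta> 0"
      by (rule trans[OF EE_add[symmetric]]) (simp add: algebra_simps)
    then have "nct_star \<theta> z m * z (0 - m) * EE \<theta> (snd m * (fst (0::int\<times>int) - fst m))
        = cnj (z (- m)) * z (- m)"
      by (simp add: star_alt algebra_simps)
    also have "\<dots> = complex_of_real (norm (z (- m)) ^ 2)"
      by (metis complex_norm_square mult.commute of_real_power)
    finally show "nct_star \<theta> z m * z (0 - m) * EE \<theta> (snd m * (fst (0::int\<times>int) - fst m)) = complex_of_real (norm (z (- m)) ^ 2)" .
  qed
  also have "\<dots> \<ge> 0"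
  proof (cases "(\<lambda>m. complex_of_real (norm (z (- m)) ^ 2)) summable_on UNIV")
    case True
    then show ?thesis by (rule infsum_nonneg_complex) (simp add: less_eq_complex_def)
  next
    case False
    then show ?thesis by (simp add: infsum_not_exists)
  qed
  finally show ?thesis .
qed

lemma EE_comb: "A + B = C \<Longrightarrow> EE \<theta> A * EE \<theta> B = EE \<theta> C"
  by (metis EE_add)

lemma EE_comb3: "A + B + C = D \<Longrightarrow> EE \<theta> A * EE \<theta> B * EE \<theta> C = EE \<theta> D"
  by (metis EE_add)

lemma mult_assoc:
  assumes "l1 a" "l1 b" "l1 c"
  shows "nct_mult \<theta> (nct_mult \<theta> a b) c = nct_mult \<theta> a (nct_mult \<theta> b c)"
proof
  fix k :: "int \<times> int"
  obtain Bc where Bc: "\<And>k. norm (c k) \<le> Bc" using l1_bounded[OF assms(3)] by blast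
  have Bc0: "0 \<le> Bc" using Bc[of 0] norm_ge_zero order_trans by blast
  define G where "G = (\<lambda>(m::int\<times>int, j::int\<times>int). a m * b j * c (k - m - j) *
       EE \<theta> (snd j * (fst k - fst m - fst j) + snd m * (fst k - fst m)))"
  have "(\<lambda>z. norm (G z)) summable_on UNIV"
  proof (rule summable_on_comparison_test)
    show "(\<lambda>z. Bc * (case z of (x, y) \<Rightarrow> norm (a x) * norm (b y))) summable_on UNIV"
      by (rule summable_on_cmult_right[OF prod_l1[OF assms(1,2)]])
    fix z :: "(int\<times>int)\<times>(int\<times>int)"
    obtain m j where z: "z = (m, j)" by (cases z)
    have "norm (G z) = norm (a m) * norm (b j) * norm (c (k - m - j))"
      by (simp add: G_def z norm_mult)
    also have "\<dots> \<le> norm (a m) * norm (b j) * Bc"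
      by (rule mult_left_mono[OF Bc]) simp
    finally show "norm (G z) \<le> Bc * (case z of (x, y) \<Rightarrow> norm (a x) * norm (b y))"
      by (simp add: z mult.commute)
  qed auto
  then have Gs: "G summable_on UNIV"
    by (simp add: summable_on_iff_abs_summable_on_complex)
  have Gs2: "(\<lambda>x. G ((\<lambda>(q, m). (m, q - m)) x)) summable_on UNIV"
    using summable_on_reindex_bij_betw[OF bij_conv] Gs by blast
  have sumG: "(\<Sum>\<^sub>\<infinity>m. \<Sum>\<^sub>\<infinity>j. G (m, j)) = infsum G UNIV"
    using infsum_Sigma_banach[of G UNIV "\<lambda>_. UNIV"] Gs by simp
  have "nct_mult \<theta> a (nct_mult \<theta> b c) k = (\<Sum>\<^sub>\<infinity>m. \<Sum>\<^sub>\<infinity>j. G (m, j))"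
    unfolding mult_alt
  proof (rule infsum_cong)
    fix m :: "int\<times>int"
    have "a m * (\<Sum>\<^sub>\<infinity>j. b j * c (k - m - j) * EE \<theta> (snd j * (fst (k - m) - fst j))) * EE \<theta> (snd m * (fst k - fst m))
       = (\<Sum>\<^sub>\<infinity>j. a m * (b j * c (k - m - j) * EE \<theta> (snd j * (fst (k - m) - fst j))) * EE \<theta> (snd m * (fst k - fst m)))"
      by (simp add: infsum_cmult_right' infsum_cmult_left')
    also have "\<dots> = (\<Sum>\<^sub>\<infinity>j. G (m, j))"
    proof (rule infsum_cong)
      fix j :: "int\<times>int"
      have "EE \<theta> (snd j * (fst (k - m) - fst j)) * EE \<theta> (snd m * (fst k - fst m))
          = EE \<theta> (snd j * (fst k - fst m - fst j) + snd m * (fst k - fst m))"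
        by (rule EE_comb) simp
      then show "a m * (b j * c (k - m - j) * EE \<theta> (snd j * (fst (k - m) - fst j))) * EE \<theta> (snd m * (fst k - fst m)) = G (m, j)"
        by (simp add: G_def mult.assoc)
    qed
    finally show "a m * (\<Sum>\<^sub>\<infinity>j. b j * c (k - m - j) * EE \<theta> (snd j * (fst (k - m) - fst j))) * EE \<theta> (snd m * (fst k - fst m)) = (\<Sum>\<^sub>\<infinity>j. G (m, j))" .
  qed
  also have "\<dots> = infsum G UNIV" by (rule sumG)
  also have "\<dots> = (\<Sum>\<^sub>\<infinity>x. G ((\<lambda>(q, m). (m, q - m)) x))"
    by (rule infsum_reindex_bij_betw[OF bij_conv, symmetric])
  also have "\<dots> = (\<Sum>\<^sub>\<infinity>q. \<Sum>\<^sub>\<infinity>m. G (m, q - m))"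
    using infsum_Sigma_banach[of "\<lambda>x. G ((\<lambda>(q, m). (m, q - m)) x)" UNIV "\<lambda>_. UNIV"] Gs2 by simp
  also have "\<dots> = nct_mult \<theta> (nct_mult \<theta> a b) c k"
    unfolding mult_alt
  proof (rule infsum_cong)
    fix q :: "int\<times>int"
    have "(\<Sum>\<^sub>\<infinity>m. a m * b (q - m) * EE \<theta> (snd m * (fst q - fst m))) * c (k - q) * EE \<theta> (snd q * (fst k - fst q))
      = (\<Sum>\<^sub>\<infinity>m. a m * b (q - m) * EE \<theta> (snd m * (fst q - fst m)) * c (k - q) * EE \<theta> (snd q * (fst k - fst q)))"
      by (simp add: infsum_cmult_left')
    also have "\<dots> = (\<Sum>\<^sub>\<infinity>m. G (m, q - m))"
    proof (rule infsum_cong)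
      fix m :: "int\<times>int"
      have e: "EE \<theta> (snd m * (fst q - fst m)) * EE \<theta> (snd q * (fst k - fst q))
          = EE \<theta> (snd (q - m) * (fst k - fst m - fst (q - m)) + snd m * (fst k - fst m))"
        by (rule EE_comb) (simp add: algebra_simps)
      have "k - m - (q - m) = k - q" by simp
      then show "a m * b (q - m) * EE \<theta> (snd m * (fst q - fst m)) * c (k - q) * EE \<theta> (snd q * (fst k - fst q)) = G (m, q - m)"
        unfolding G_def using e by (simp add: ac_simps)
    qed
    finally show "(\<Sum>\<^sub>\<infinity>m. G (m, q - m)) = (\<Sum>\<^sub>\<infinity>m. a m * b (q - m) * EE \<theta> (snd m * (fst q - fst m))) * c (k - q) * EE \<theta> (snd q * (fst k - fst q))"
      by simp
  qed
  finally show "nct_mult \<theta> (nct_mult \<theta> a b) c k = nct_mult \<theta> a (nct_mult \<theta> b c) k" ..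
qed

lemma star_mult: "nct_star \<theta> (nct_mult \<theta> a b) = nct_mult \<theta> (nct_star \<theta> b) (nct_star \<theta> a)"
proof
  fix r :: "int\<times>int"
  have "nct_star \<theta> (nct_mult \<theta> a b) r =
     (\<Sum>\<^sub>\<infinity>m. cnj (a m * b (- r - m) * EE \<theta> (snd m * (fst (- r) - fst m)))) * EE \<theta> (fst r * snd r)"
    by (simp only: star_alt mult_alt infsum_cnj)
  also have "\<dots> = (\<Sum>\<^sub>\<infinity>m. cnj (a m * b (- r - m) * EE \<theta> (snd m * (fst (- r) - fst m))) * EE \<theta> (fst r * snd r))"
    by (rule infsum_cmult_left'[symmetric])
  also have "\<dots> = (\<Sum>\<^sub>\<infinity>m. nct_star \<theta> b (r + m) * nct_star \<theta> a (r - (r + m)) * EE \<theta> (snd (r + m) * (fst r - fst (r + m))))"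
  proof (rule infsum_cong)
    fix m :: "int\<times>int"
    have e: "EE \<theta> (- (snd m * (fst (- r) - fst m))) * EE \<theta> (fst r * snd r) =
          EE \<theta> (fst (r + m) * snd (r + m)) * EE \<theta> (fst (r - (r + m)) * snd (r - (r + m))) * EE \<theta> (snd (r + m) * (fst r - fst (r + m)))"
      by (rule trans[OF EE_comb[OF refl] EE_comb3[symmetric]]) (simp add: algebra_simps)
    have "- (r + m) = - r - m" by simp
    then show "cnj (a m * b (- r - m) * EE \<theta> (snd m * (fst (- r) - fst m))) * EE \<theta> (fst r * snd r) =
       nct_star \<theta> b (r + m) * nct_star \<theta> a (r - (r + m)) * EE \<theta> (snd (r + m) * (fst r - fst (r + m)))"
      unfolding star_alt \<open>- (r + m) = - r - m\<close> using e by (simp add: EE_cnj[symmetric] mult.assoc mult.commute mult.left_commute)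
  qed
  also have "\<dots> = (\<Sum>\<^sub>\<infinity>j. nct_star \<theta> b j * nct_star \<theta> a (r - j) * EE \<theta> (snd j * (fst r - fst j)))"
    by (rule infsum_reindex_bij_betw[OF bij_shift])
  also have "\<dots> = nct_mult \<theta> (nct_star \<theta> b) (nct_star \<theta> a) r"
    by (simp add: mult_alt)
  finally show "nct_star \<theta> (nct_mult \<theta> a b) r = nct_mult \<theta> (nct_star \<theta> b) (nct_star \<theta> a) r" .
qed

lemma star_d1: "nct_star \<theta> (nct_d1 a) = nct_d1 (nct_star \<theta> a)"
  by (rule ext) (simp add: star_alt d1_alt)

lemma star_d2: "nct_star \<theta> (nct_d2 a) = nct_d2 (nct_star \<theta> a)"
  by (rule ext) (simp add: star_alt d2_alt)

lemma star_lin: "nct_star \<theta> (\<lambda>k. x * a k + y * b k) = (\<lambda>k. cnj x * nct_star \<theta> a k + cnj y * nct_star \<theta> b k)"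
  by (rule ext) (simp add: star_alt algebra_simps)

lemma summable_nat_sq: "summable (\<lambda>n::nat. 1 / (1 + real n) ^ 2)"
proof -
  have "summable (\<lambda>n::nat. inverse (real n ^ 2))" by (rule inverse_power_summable) simp
  then have "summable (\<lambda>n::nat. inverse (real (Suc n) ^ 2))"
    by (subst summable_Suc_iff)
  then show ?thesis by (simp add: inverse_eq_divide add.commute)
qed

lemma w_summable: "(\<lambda>m::int. 1 / (1 + real_of_int \<bar>m\<bar>) ^ 2) summable_on UNIV"
proof -
  let ?w = "\<lambda>m::int. 1 / (1 + real_of_int \<bar>m\<bar>) ^ 2"
  have s: "(\<lambda>n::nat. 1 / (1 + real n) ^ 2) summable_on UNIV"
    using summable_nat_sq by (subst summable_on_UNIV_nonneg_real_iff) auto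
  have "?w summable_on range int"
    by (subst summable_on_reindex) (use s in \<open>auto simp: o_def inj_on_def\<close>)
  moreover have "?w summable_on range (\<lambda>n::nat. - int n)"
    by (subst summable_on_reindex) (use s in \<open>auto simp: o_def inj_on_def\<close>)
  ultimately have "?w summable_on (range int \<union> range (\<lambda>n::nat. - int n))"
    by (rule summable_on_union)
  moreover have "range int \<union> range (\<lambda>n::nat. - int n) = UNIV"
  proof -
    have "x \<in> range int \<union> range (\<lambda>n::nat. - int n)" for x :: int
    proof (cases "x \<ge> 0")
      case True then show ?thesis by (auto intro: image_eqI[of _ _ "nat x"])
    next
      case False then show ?thesis by (auto intro!: UnI2 image_eqI[of _ _ "nat (- x)"])
    qed
    then show ?thesis by auto
  qed
  ultimately show ?thesis by simp
qed

lemma W_summable: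
  "(\<lambda>(m::int, n::int). 1 / (1 + real_of_int \<bar>m\<bar>) ^ 2 * (1 / (1 + real_of_int \<bar>n\<bar>) ^ 2)) summable_on UNIV"
proof -
  let ?w = "\<lambda>m::int. 1 / (1 + real_of_int \<bar>m\<bar>) ^ 2"
  let ?f = "\<lambda>(x,y). ?w x * ?w y"
  have "(\<lambda>z. norm (?f z)) summable_on Sigma UNIV (\<lambda>_. UNIV)"
  proof (subst Infinite_Sum.abs_summable_on_Sigma_iff, intro conjI ballI)
    fix x show "(\<lambda>y. norm (?f (x, y))) summable_on UNIV"
      using summable_on_cmult_right[OF w_summable, of "?w x"] by simp
  next
    have eq: "norm (\<Sum>\<^sub>\<infinity>y\<in>UNIV. norm (?f (x, y))) = ?w x * (\<Sum>\<^sub>\<infinity>y. ?w y)" for x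
    proof -
      have "(\<Sum>\<^sub>\<infinity>y\<in>UNIV. norm (?f (x, y))) = ?w x * (\<Sum>\<^sub>\<infinity>y. ?w y)"
        by (subst infsum_cmult_right'[symmetric]) (rule infsum_cong, simp)
      moreover have "(\<Sum>\<^sub>\<infinity>y. ?w y) \<ge> 0" by (rule infsum_nonneg) auto
      ultimately show ?thesis by simp
    qed
    show "(\<lambda>x. norm (\<Sum>\<^sub>\<infinity>y\<in>UNIV. norm (?f (x, y)))) summable_on UNIV"
      unfolding eq by (rule summable_on_cmult_left[OF w_summable])
  qed
  then show ?thesis by (simp add: case_prod_unfold)
qed

lemma schwartz_l1_aux:
  assumes "nct_schwartz p"
  obtains C where "\<And>m n. (1 + real_of_int \<bar>m\<bar> + real_of_int \<bar>n\<bar>) * cmod (p (m, n))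
     \<le> C * (1 / (1 + real_of_int \<bar>m\<bar>) ^ 2 * (1 / (1 + real_of_int \<bar>n\<bar>) ^ 2))"
proof -
  obtain C where C: "\<And>m n. (1 + real_of_int \<bar>m\<bar> + real_of_int \<bar>n\<bar>) ^ 5 * cmod (p (m, n)) \<le> C"
    using assms unfolding nct_schwartz_def by blast
  have "(1 + real_of_int \<bar>m\<bar> + real_of_int \<bar>n\<bar>) * cmod (p (m, n))
     \<le> C * (1 / (1 + real_of_int \<bar>m\<bar>) ^ 2 * (1 / (1 + real_of_int \<bar>n\<bar>) ^ 2))" for m n
  proof -
    define s where "s = 1 + real_of_int \<bar>m\<bar> + real_of_int \<bar>n\<bar>"
    define u where "u = (1 + real_of_int \<bar>m\<bar>) * (1 + real_of_int \<bar>n\<bar>)"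
    define c where "c = cmod (p (m, n))"
    have s0: "s \<ge> 1" and u0: "u \<ge> 1" and c0: "c \<ge> 0"
      using mult_mono[of 1 "1 + real_of_int \<bar>m\<bar>" 1 "1 + real_of_int \<bar>n\<bar>"] by (auto simp: s_def u_def c_def)
    have us: "u \<le> s ^ 2" unfolding u_def s_def power2_eq_square by (simp add: algebra_simps)
    have "u ^ 2 \<le> (s ^ 2) ^ 2" by (rule power_mono[OF us]) (use u0 in auto)
    then have "s * c * u ^ 2 \<le> s * c * s ^ 4"
      by (intro mult_left_mono) (use s0 c0 in auto)
    also have "\<dots> = s ^ 5 * c" by (simp add: power_numeral_reduce)
    also have "\<dots> \<le> C" using C[of m n] by (simp add: s_def c_def)
    finally have "s * c * u ^ 2 \<le> C" .
    then have "s * c \<le> C / u ^ 2" using u0 by (simp add: field_simps)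
    then show ?thesis by (simp add: s_def c_def u_def power_mult_distrib)
  qed
  then show ?thesis using that by blast
qed

lemma schwartz_l1:
  assumes "nct_schwartz p"
  shows "l1 p" "l1 (nct_d1 p)" "l1 (nct_d2 p)"
proof -
  obtain C where C: "\<And>m n. (1 + real_of_int \<bar>m\<bar> + real_of_int \<bar>n\<bar>) * cmod (p (m, n))
     \<le> C * (1 / (1 + real_of_int \<bar>m\<bar>) ^ 2 * (1 / (1 + real_of_int \<bar>n\<bar>) ^ 2))"
    using schwartz_l1_aux[OF assms] by blast
  let ?W = "\<lambda>z. 2 * pi * C * (case z of (m::int, n::int) \<Rightarrow> 1 / (1 + real_of_int \<bar>m\<bar>) ^ 2 * (1 / (1 + real_of_int \<bar>n\<bar>) ^ 2))"
  have Ws: "?W summable_on UNIV" by (rule summable_on_cmult_right[OF W_summable])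
  have b1: "cmod (p z) \<le> ?W z" for z
  proof -
    obtain m n where z: "z = (m, n)" by (cases z)
    have "cmod (p (m,n)) \<le> (1 + real_of_int \<bar>m\<bar> + real_of_int \<bar>n\<bar>) * cmod (p (m, n))"
      using mult_right_mono[of 1 "1 + real_of_int \<bar>m\<bar> + real_of_int \<bar>n\<bar>" "cmod (p (m,n))"] by simp
    also have "\<dots> \<le> 2 * pi * ((1 + real_of_int \<bar>m\<bar> + real_of_int \<bar>n\<bar>) * cmod (p (m, n)))"
      using mult_right_mono[of 1 "2*pi" "(1 + real_of_int \<bar>m\<bar> + real_of_int \<bar>n\<bar>) * cmod (p (m, n))"] pi_gt3 by simp
    also have "\<dots> \<le> 2 * pi * (C * (1 / (1 + real_of_int \<bar>m\<bar>) ^ 2 * (1 / (1 + real_of_int \<bar>n\<bar>) ^ 2)))"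
      by (rule mult_left_mono[OF C]) simp
    finally show ?thesis by (simp add: z mult.assoc)
  qed
  have bd: "cmod (nct_d1 p z) \<le> ?W z" "cmod (nct_d2 p z) \<le> ?W z" for z
  proof -
    obtain m n where z: "z = (m, n)" by (cases z)
    have "cmod (nct_d1 p z) = 2 * pi * (real_of_int \<bar>m\<bar> * cmod (p (m, n)))"
      by (simp add: z nct_d1_def norm_mult)
    also have "\<dots> \<le> 2 * pi * ((1 + real_of_int \<bar>m\<bar> + real_of_int \<bar>n\<bar>) * cmod (p (m, n)))"
      by (intro mult_left_mono mult_right_mono) auto
    also have "\<dots> \<le> 2 * pi * (C * (1 / (1 + real_of_int \<bar>m\<bar>) ^ 2 * (1 / (1 + real_of_int \<bar>n\<bar>) ^ 2)))"
      by (rule mult_left_mono[OF C]) simp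
    finally show "cmod (nct_d1 p z) \<le> ?W z" by (simp add: z mult.assoc)
    have "cmod (nct_d2 p z) = 2 * pi * (real_of_int \<bar>n\<bar> * cmod (p (m, n)))"
      by (simp add: z nct_d2_def norm_mult)
    also have "\<dots> \<le> 2 * pi * ((1 + real_of_int \<bar>m\<bar> + real_of_int \<bar>n\<bar>) * cmod (p (m, n)))"
      by (intro mult_left_mono mult_right_mono) auto
    also have "\<dots> \<le> 2 * pi * (C * (1 / (1 + real_of_int \<bar>m\<bar>) ^ 2 * (1 / (1 + real_of_int \<bar>n\<bar>) ^ 2)))"
      by (rule mult_left_mono[OF C]) simp
    finally show "cmod (nct_d2 p z) \<le> ?W z" by (simp add: z mult.assoc)
  qed
  show "l1 p" by (rule summable_on_comparison_test[OF Ws b1]) simp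
  show "l1 (nct_d1 p)" by (rule summable_on_comparison_test[OF Ws bd(1)]) simp
  show "l1 (nct_d2 p)" by (rule summable_on_comparison_test[OF Ws bd(2)]) simp
qed

lemma S_alg:
  fixes \<tau> P Q R T :: complex
  assumes "Im \<tau> > 0"
  shows "(1 / (2 * pi)) * (
      of_real (sqrt_det_metric \<tau> * metric_inv \<tau> 1 1) * (P + Q + R + T)
    + of_real (sqrt_det_metric \<tau> * metric_inv \<tau> 1 2) * (\<tau> * P + cnj \<tau> * Q + \<tau> * R + cnj \<tau> * T)
    + of_real (sqrt_det_metric \<tau> * metric_inv \<tau> 2 1) * (\<tau> * P + \<tau> * Q + cnj \<tau> * R + cnj \<tau> * T)
    + of_real (sqrt_det_metric \<tau> * metric_inv \<tau> 2 2) * (\<tau> * \<tau> * P + \<tau> * cnj \<tau> * Q + cnj \<tau> * \<tau> * R + cnj \<tau> * cnj \<tau> * T))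
   = of_real (Im \<tau> / pi) * (Q + R)"
proof -
  obtain x y where t: "\<tau> = Complex x y" by (cases \<tau>)
  have y: "y > 0" using assms t by simp
  have sd: "sqrt_det_metric \<tau> = y"
    using y by (simp add: sqrt_det_metric_def metric_def t cmod_def power2_eq_square)
  have c: "Complex x y = of_real x + \<i> * of_real y" by (simp add: complex_eq_iff)
  show ?thesis
    using y unfolding sd unfolding metric_inv_def t cmod_def c
    by (simp add: field_simps power2_eq_square)
qed

lemma aux: "- (c::complex) * (- a * X + a * Y) = c * a * (X - Y)"
  by (simp add: algebra_simps)

lemma psi_alg:
  fixes \<tau> X Y :: complex
  assumes "Im \<tau> > 0"
  shows "- (1 / (2 * pi * \<i>)) * ((cnj \<tau> - \<tau>) * X + (\<tau> - cnj \<tau>) * Y) = of_real (Im \<tau> / pi) * (X - Y)"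
proof -
  have a: "cnj \<tau> - \<tau> = - (2 * \<i> * of_real (Im \<tau>))" by (simp add: complex_eq_iff)
  have b: "\<tau> - cnj \<tau> = 2 * \<i> * of_real (Im \<tau>)" by (simp add: complex_eq_iff)
  have "- (1 / (2 * pi * \<i>)) * (- (2 * \<i> * of_real (Im \<tau>)) * X + 2 * \<i> * of_real (Im \<tau>) * Y)
      = (1 / (2 * pi * \<i>)) * (2 * \<i> * of_real (Im \<tau>)) * (X - Y)"
    using aux[of "1 / (2 * pi * \<i>)" "2 * \<i> * of_real (Im \<tau>)" X Y] by simp
  also have "(1 / (2 * pi * \<i>)) * (2 * \<i> * of_real (Im \<tau>)) = of_real (Im \<tau> / pi)"
    by (simp add: field_simps)
  finally show ?thesis unfolding a b .
qed

lemma t1: assumes "d = \<tau> - cnj \<tau>" "d \<noteq> 0"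
  shows "(a::complex) = 1 * ((- cnj \<tau> / d) * a + (1 / d) * b) + 1 * ((\<tau> / d) * a + (- 1 / d) * b)"
proof -
  have "1 * ((- cnj \<tau> / d) * a + (1 / d) * b) + 1 * ((\<tau> / d) * a + (- 1 / d) * b) = ((\<tau> - cnj \<tau>) / d) * a"
    by (simp add: algebra_simps add_divide_distrib diff_divide_distrib)
  then show ?thesis using assms by simp
qed
lemma t2: assumes "d = \<tau> - cnj \<tau>" "d \<noteq> 0"
  shows "(b::complex) = \<tau> * ((- cnj \<tau> / d) * a + (1 / d) * b) + cnj \<tau> * ((\<tau> / d) * a + (- 1 / d) * b)"
proof -
  have "\<tau> * ((- cnj \<tau> / d) * a + (1 / d) * b) + cnj \<tau> * ((\<tau> / d) * a + (- 1 / d) * b) = ((\<tau> - cnj \<tau>) / d) * b"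
    by (simp add: algebra_simps add_divide_distrib diff_divide_distrib)
  then show ?thesis using assms by simp
qed
lemma t3: assumes "cnj d = - d" shows "cnj (- cnj \<tau> / d) = \<tau> / d" "cnj (1 / d) = - 1 / d" "cnj (\<tau> / d) = - cnj \<tau> / d" "cnj (- 1 / d) = 1 / d"
  using assms by simp_all

lemma int_lin: "nct_int (\<lambda>r. x * f r + y * g r) = x * nct_int f + y * nct_int g"
  by (simp add: nct_int_def)

lemma leib_comb:
  assumes "l1 p" "l1 A" "l1 B"
    and "A = (\<lambda>k. nct_mult \<theta> A p k + nct_mult \<theta> p A k)"
    and "B = (\<lambda>k. nct_mult \<theta> B p k + nct_mult \<theta> p B k)"
  shows "(\<lambda>k. x * A k + y * B k) = (\<lambda>k. nct_mult \<theta> (\<lambda>k. x * A k + y * B k) p k + nct_mult \<theta> p (\<lambda>k. x * A k + y * B k) k)"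
proof
  fix k
  have "x * A k + y * B k = x * (nct_mult \<theta> A p k + nct_mult \<theta> p A k) + y * (nct_mult \<theta> B p k + nct_mult \<theta> p B k)"
    using fun_cong[OF assms(4), of k] fun_cong[OF assms(5), of k] by simp
  then show "x * A k + y * B k = nct_mult \<theta> (\<lambda>k. x * A k + y * B k) p k + nct_mult \<theta> p (\<lambda>k. x * A k + y * B k) k"
    using assms(1-3) by (simp add: mult_lin_left mult_lin_right algebra_simps)
qed

lemma pDp:
  assumes "l1 p" "l1 D" "p = nct_mult \<theta> p p"
    and "D = (\<lambda>k. nct_mult \<theta> D p k + nct_mult \<theta> p D k)"
  shows "nct_mult \<theta> p (nct_mult \<theta> D p) = (\<lambda>_. 0)"
proof -
  have l: "l1 (nct_mult \<theta> D p)" "l1 (nct_mult \<theta> p D)" using assms mult_l1 by auto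
  have e: "(\<lambda>k. 1 * nct_mult \<theta> D p k + 1 * nct_mult \<theta> p D k) = D"
    by (rule trans[OF _ assms(4)[symmetric]]) simp
  have "nct_mult \<theta> p D = nct_mult \<theta> p (\<lambda>k. 1 * nct_mult \<theta> D p k + 1 * nct_mult \<theta> p D k)"
    by (simp only: e)
  also have "\<dots> = (\<lambda>r. nct_mult \<theta> p (nct_mult \<theta> D p) r + nct_mult \<theta> p (nct_mult \<theta> p D) r)"
    using mult_lin_right[OF l assms(1), where x=1 and y=1 and \<theta>=\<theta>] by simp
  also have "nct_mult \<theta> p (nct_mult \<theta> p D) = nct_mult \<theta> p D"
    using mult_assoc[OF assms(1) assms(1) assms(2), of \<theta>, unfolded assms(3)[symmetric]] by (rule sym)
  finally have "\<And>r. nct_mult \<theta> p D r = nct_mult \<theta> p (nct_mult \<theta> D p) r + nct_mult \<theta> p D r"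
    by (metis)
  then show ?thesis by (auto simp: fun_eq_iff)
qed

lemma key_pos:
  assumes "l1 p" "l1 D" "l1 D2" "p = nct_mult \<theta> p p"
    and "D = (\<lambda>k. nct_mult \<theta> D p k + nct_mult \<theta> p D k)"
    and "nct_mult \<theta> p (nct_mult \<theta> D2 p) = (\<lambda>_. 0)"
    and "nct_star \<theta> (nct_mult \<theta> D p) = nct_mult \<theta> p D2"
  shows "nct_int (nct_mult \<theta> (nct_mult \<theta> p D2) D) = nct_int (nct_mult \<theta> (nct_star \<theta> (nct_mult \<theta> D p)) (nct_mult \<theta> D p))"
proof -
  have l: "l1 (nct_mult \<theta> D p)" "l1 (nct_mult \<theta> p D)" "l1 (nct_mult \<theta> p D2)" using assms mult_l1 by auto
  have e: "(\<lambda>k. 1 * nct_mult \<theta> D p k + 1 * nct_mult \<theta> p D k) = D"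
    by (rule trans[OF _ assms(5)[symmetric]]) simp
  have "nct_mult \<theta> (nct_mult \<theta> p D2) D = nct_mult \<theta> (nct_mult \<theta> p D2) (\<lambda>k. 1 * nct_mult \<theta> D p k + 1 * nct_mult \<theta> p D k)"
    by (simp only: e)
  also have "\<dots> = (\<lambda>r. nct_mult \<theta> (nct_mult \<theta> p D2) (nct_mult \<theta> D p) r + nct_mult \<theta> (nct_mult \<theta> p D2) (nct_mult \<theta> p D) r)"
    using mult_lin_right[OF l(1,2) l(3), where x=1 and y=1 and \<theta>=\<theta>] by simp
  also have "nct_mult \<theta> (nct_mult \<theta> p D2) (nct_mult \<theta> p D) = nct_mult \<theta> (nct_mult \<theta> (nct_mult \<theta> p D2) p) D"
    using mult_assoc[OF l(3) assms(1) assms(2)] by simp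
  also have "nct_mult \<theta> (nct_mult \<theta> p D2) p = nct_mult \<theta> p (nct_mult \<theta> D2 p)"
    using mult_assoc[OF assms(1) assms(3) assms(1)] by simp
  finally show ?thesis using assms(6,7) by (simp add: nct_int_def)
qed

lemma QXY:
  assumes "l1 p" "l1 D" "l1 D2"
    and "D = (\<lambda>k. nct_mult \<theta> D p k + nct_mult \<theta> p D k)"
  shows "nct_int (nct_mult \<theta> D D2) = nct_int (nct_mult \<theta> (nct_mult \<theta> p D) D2) + nct_int (nct_mult \<theta> (nct_mult \<theta> p D2) D)"
proof -
  have l: "l1 (nct_mult \<theta> D p)" "l1 (nct_mult \<theta> p D)" "l1 (nct_mult \<theta> p D2)" using assms mult_l1 by auto
  have e: "(\<lambda>k. 1 * nct_mult \<theta> D p k + 1 * nct_mult \<theta> p D k) = D"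
    by (rule trans[OF _ assms(4)[symmetric]]) simp
  have "nct_mult \<theta> D D2 = nct_mult \<theta> (\<lambda>k. 1 * nct_mult \<theta> D p k + 1 * nct_mult \<theta> p D k) D2"
    by (simp only: e)
  also have "\<dots> = (\<lambda>r. nct_mult \<theta> (nct_mult \<theta> D p) D2 r + nct_mult \<theta> (nct_mult \<theta> p D) D2 r)"
    using mult_lin_left[OF l(1,2) assms(3), where x=1 and y=1 and \<theta>=\<theta>] by simp
  also have "nct_mult \<theta> (nct_mult \<theta> D p) D2 = nct_mult \<theta> D (nct_mult \<theta> p D2)"
    using mult_assoc[OF assms(2) assms(1) assms(3)] by simp
  finally have "nct_int (nct_mult \<theta> D D2) = nct_int (nct_mult \<theta> D (nct_mult \<theta> p D2)) + nct_int (nct_mult \<theta> (nct_mult \<theta> p D) D2)"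
    by (simp add: nct_int_def)
  then show ?thesis using trace_comm[of \<theta> D "nct_mult \<theta> p D2"] by simp
qed

theorem mainTheorem1:
  fixes \<theta> :: real and \<tau> :: complex and p :: nct
  assumes "Im \<tau> > 0"
    and "nct_projection \<theta> p"
  shows "Im (S_tau \<tau> \<theta> p) = 0 \<and> Re (S_tau \<tau> \<theta> p) \<ge> 2 * cmod (psi \<theta> p)
     \<and> ((nct_mult \<theta> (delbar_tau \<tau> p) p = (\<lambda>_. 0)
          \<or> nct_mult \<theta> p (del_tau \<tau> p) = (\<lambda>_. 0)
          \<or> nct_mult \<theta> (del_tau \<tau> p) p = (\<lambda>_. 0)
          \<or> nct_mult \<theta> p (delbar_tau \<tau> p) = (\<lambda>_. 0))
        \<longrightarrow> S_tau \<tau> \<theta> p = of_real (2 * cmod (psi \<theta> p)))"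
proof -
  have tau: "Im \<tau> > 0" by (rule assms(1))
  have sch: "nct_schwartz p" and pp: "p = nct_mult \<theta> p p" and ps: "p = nct_star \<theta> p"
    using assms(2) unfolding nct_projection_def by auto
  have lp: "l1 p" and lA: "l1 (nct_d1 p)" and lB: "l1 (nct_d2 p)"
    using schwartz_l1[OF sch] by auto
  define A where "A = nct_d1 p"
  define B where "B = nct_d2 p"
  define E where "E = del_tau \<tau> p"
  define F where "F = delbar_tau \<tau> p"
  define d where "d = \<tau> - cnj \<tau>"
  have d0: "d \<noteq> 0" using tau by (auto simp: d_def complex_eq_iff)
  have cd: "cnj d = - d" by (simp add: d_def)
  have d0': "\<tau> - cnj \<tau> \<noteq> 0" using d0 by (simp add: d_def)
  have lA': "l1 A" and lB': "l1 B" using lA lB by (simp_all add: A_def B_def)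
  have E': "E = (\<lambda>k. (- cnj \<tau> / d) * A k + (1 / d) * B k)"
    by (rule ext) (simp add: E_def del_tau_def A_def B_def d_def[symmetric] ring_distribs)
  have F': "F = (\<lambda>k. (\<tau> / d) * A k + (- 1 / d) * B k)"
    by (rule ext) (simp add: F_def delbar_tau_def A_def B_def d_def[symmetric] algebra_simps)
  have lE: "l1 E" unfolding E' by (rule l1_lin[OF lA' lB'])
  have lF: "l1 F" unfolding F' by (rule l1_lin[OF lA' lB'])
  have A_EF: "A = (\<lambda>k. 1 * E k + 1 * F k)"
    unfolding E' F' by (rule ext) (rule t1[OF d_def d0])
  have B_EF: "B = (\<lambda>k. \<tau> * E k + cnj \<tau> * F k)"
    unfolding E' F' by (rule ext) (rule t2[OF d_def d0])
  have LA: "A = (\<lambda>k. nct_mult \<theta> A p k + nct_mult \<theta> p A k)"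
  proof -
    have "nct_d1 (nct_mult \<theta> p p) = (\<lambda>k. nct_mult \<theta> (nct_d1 p) p k + nct_mult \<theta> p (nct_d1 p) k)"
      by (rule leibniz_d1[OF lp lp lA lA])
    then show ?thesis unfolding A_def by (simp only: pp[symmetric])
  qed
  have LB: "B = (\<lambda>k. nct_mult \<theta> B p k + nct_mult \<theta> p B k)"
  proof -
    have "nct_d2 (nct_mult \<theta> p p) = (\<lambda>k. nct_mult \<theta> (nct_d2 p) p k + nct_mult \<theta> p (nct_d2 p) k)"
      by (rule leibniz_d2[OF lp lp lB lB])
    then show ?thesis unfolding B_def by (simp only: pp[symmetric])
  qed
  have LE: "E = (\<lambda>k. nct_mult \<theta> E p k + nct_mult \<theta> p E k)"
    unfolding E' by (rule leib_comb[OF lp lA' lB' LA LB])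
  have LF: "F = (\<lambda>k. nct_mult \<theta> F p k + nct_mult \<theta> p F k)"
    unfolding F' by (rule leib_comb[OF lp lA' lB' LA LB])
  have zE: "nct_mult \<theta> p (nct_mult \<theta> E p) = (\<lambda>_. 0)" by (rule pDp[OF lp lE pp LE])
  have zF: "nct_mult \<theta> p (nct_mult \<theta> F p) = (\<lambda>_. 0)" by (rule pDp[OF lp lF pp LF])
  have sp: "nct_star \<theta> p = p" using ps[symmetric] .
  have sA: "nct_star \<theta> A = A" unfolding A_def star_d1 sp ..
  have sB: "nct_star \<theta> B = B" unfolding B_def star_d2 sp ..
  have sE: "nct_star \<theta> E = F"
  proof -
    have "nct_star \<theta> E = (\<lambda>k. cnj (- cnj \<tau> / d) * A k + cnj (1 / d) * B k)"
      by (simp only: E' star_lin sA sB)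
    also have "\<dots> = F" by (simp only: F' t3(1)[of d \<tau>, OF cd] t3(2)[OF cd] t3(3)[of d \<tau>, OF cd] t3(4)[OF cd])
    finally show ?thesis .
  qed
  have sF: "nct_star \<theta> F = E"
  proof -
    have "nct_star \<theta> F = (\<lambda>k. cnj (\<tau> / d) * A k + cnj (- 1 / d) * B k)"
      by (simp only: F' star_lin sA sB)
    also have "\<dots> = E" by (simp only: E' t3(1)[of d \<tau>, OF cd] t3(2)[OF cd] t3(3)[of d \<tau>, OF cd] t3(4)[OF cd])
    finally show ?thesis .
  qed
  have sEp: "nct_star \<theta> (nct_mult \<theta> E p) = nct_mult \<theta> p F" by (simp add: star_mult sp sE)
  have sFp: "nct_star \<theta> (nct_mult \<theta> F p) = nct_mult \<theta> p E" by (simp add: star_mult sp sF)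
  define X where "X = nct_int (nct_mult \<theta> (nct_mult \<theta> p E) F)"
  define Y where "Y = nct_int (nct_mult \<theta> (nct_mult \<theta> p F) E)"
  have Ypos: "Y = nct_int (nct_mult \<theta> (nct_star \<theta> (nct_mult \<theta> E p)) (nct_mult \<theta> E p))"
    unfolding Y_def by (rule key_pos[OF lp lE lF pp LE zF sEp])
  have Xpos: "X = nct_int (nct_mult \<theta> (nct_star \<theta> (nct_mult \<theta> F p)) (nct_mult \<theta> F p))"
    unfolding X_def by (rule key_pos[OF lp lF lE pp LF zE sFp])
  have X0: "X \<ge> 0" unfolding Xpos by (rule star_pos)
  have Y0: "Y \<ge> 0" unfolding Ypos by (rule star_pos)
  have Q: "nct_int (nct_mult \<theta> E F) = X + Y"
    unfolding X_def Y_def by (rule QXY[OF lp lE lF LE])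
  have R: "nct_int (nct_mult \<theta> F E) = X + Y"
    unfolding X_def Y_def using QXY[OF lp lF lE LF] by simp
  have S: "S_tau \<tau> \<theta> p = of_real (Im \<tau> / pi) * (2 * X + 2 * Y)"
  proof -
    have "S_tau \<tau> \<theta> p = (1 / (2 * pi)) * (
      of_real (sqrt_det_metric \<tau> * metric_inv \<tau> 1 1) * nct_int (nct_mult \<theta> A A)
    + of_real (sqrt_det_metric \<tau> * metric_inv \<tau> 1 2) * nct_int (nct_mult \<theta> A B)
    + of_real (sqrt_det_metric \<tau> * metric_inv \<tau> 2 1) * nct_int (nct_mult \<theta> B A)
    + of_real (sqrt_det_metric \<tau> * metric_inv \<tau> 2 2) * nct_int (nct_mult \<theta> B B))"
      by (simp add: S_tau_def nct_deriv_def A_def B_def add.assoc)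
    also have "\<dots> = (1 / (2 * pi)) * (
      of_real (sqrt_det_metric \<tau> * metric_inv \<tau> 1 1) * (nct_int (nct_mult \<theta> E E) + nct_int (nct_mult \<theta> E F) + nct_int (nct_mult \<theta> F E) + nct_int (nct_mult \<theta> F F))
    + of_real (sqrt_det_metric \<tau> * metric_inv \<tau> 1 2) * (\<tau> * nct_int (nct_mult \<theta> E E) + cnj \<tau> * nct_int (nct_mult \<theta> E F) + \<tau> * nct_int (nct_mult \<theta> F E) + cnj \<tau> * nct_int (nct_mult \<theta> F F))
    + of_real (sqrt_det_metric \<tau> * metric_inv \<tau> 2 1) * (\<tau> * nct_int (nct_mult \<theta> E E) + \<tau> * nct_int (nct_mult \<theta> E F) + cnj \<tau> * nct_int (nct_mult \<theta> F E) + cnj \<tau> * nct_int (nct_mult \<theta> F F))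
    + of_real (sqrt_det_metric \<tau> * metric_inv \<tau> 2 2) * (\<tau> * \<tau> * nct_int (nct_mult \<theta> E E) + \<tau> * cnj \<tau> * nct_int (nct_mult \<theta> E F) + cnj \<tau> * \<tau> * nct_int (nct_mult \<theta> F E) + cnj \<tau> * cnj \<tau> * nct_int (nct_mult \<theta> F F)))"
    proof -
      have "nct_mult \<theta> A A = (\<lambda>r. 1 * 1 * nct_mult \<theta> E E r + 1 * 1 * nct_mult \<theta> E F r + 1 * 1 * nct_mult \<theta> F E r + 1 * 1 * nct_mult \<theta> F F r)"
        unfolding A_EF by (rule mult_bilin[OF lE lF])
      moreover have "nct_mult \<theta> A B = (\<lambda>r. 1 * \<tau> * nct_mult \<theta> E E r + 1 * cnj \<tau> * nct_mult \<theta> E F r + 1 * \<tau> * nct_mult \<theta> F E r + 1 * cnj \<tau> * nct_mult \<theta> F F r)"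
        unfolding A_EF B_EF by (rule mult_bilin[OF lE lF])
      moreover have "nct_mult \<theta> B A = (\<lambda>r. \<tau> * 1 * nct_mult \<theta> E E r + \<tau> * 1 * nct_mult \<theta> E F r + cnj \<tau> * 1 * nct_mult \<theta> F E r + cnj \<tau> * 1 * nct_mult \<theta> F F r)"
        unfolding A_EF B_EF by (rule mult_bilin[OF lE lF])
      moreover have "nct_mult \<theta> B B = (\<lambda>r. \<tau> * \<tau> * nct_mult \<theta> E E r + \<tau> * cnj \<tau> * nct_mult \<theta> E F r + cnj \<tau> * \<tau> * nct_mult \<theta> F E r + cnj \<tau> * cnj \<tau> * nct_mult \<theta> F F r)"
        unfolding B_EF by (rule mult_bilin[OF lE lF])
      ultimately show ?thesis by (simp add: nct_int_def)
    qed
    also have "\<dots> = of_real (Im \<tau> / pi) * (nct_int (nct_mult \<theta> E F) + nct_int (nct_mult \<theta> F E))"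
      by (rule S_alg[OF tau])
    finally show ?thesis unfolding Q R by simp
  qed
  have psi: "psi \<theta> p = of_real (Im \<tau> / pi) * (X - Y)"
  proof -
    have lEF: "l1 (nct_mult \<theta> E F)" and lFE: "l1 (nct_mult \<theta> F E)" using mult_l1 lE lF by auto
    have AB: "nct_mult \<theta> A B = (\<lambda>r. 1 * \<tau> * nct_mult \<theta> E E r + 1 * cnj \<tau> * nct_mult \<theta> E F r + 1 * \<tau> * nct_mult \<theta> F E r + 1 * cnj \<tau> * nct_mult \<theta> F F r)"
      unfolding A_EF B_EF by (rule mult_bilin[OF lE lF])
    have BA: "nct_mult \<theta> B A = (\<lambda>r. \<tau> * 1 * nct_mult \<theta> E E r + \<tau> * 1 * nct_mult \<theta> E F r + cnj \<tau> * 1 * nct_mult \<theta> F E r + cnj \<tau> * 1 * nct_mult \<theta> F F r)"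
      unfolding A_EF B_EF by (rule mult_bilin[OF lE lF])
    have diff: "(\<lambda>k. nct_mult \<theta> A B k - nct_mult \<theta> B A k) = (\<lambda>k. (cnj \<tau> - \<tau>) * nct_mult \<theta> E F k + (\<tau> - cnj \<tau>) * nct_mult \<theta> F E k)"
      unfolding AB BA by (rule ext) (simp add: algebra_simps)
    have "nct_int (nct_mult \<theta> p (\<lambda>k. nct_mult \<theta> A B k - nct_mult \<theta> B A k))
        = (cnj \<tau> - \<tau>) * nct_int (nct_mult \<theta> p (nct_mult \<theta> E F)) + (\<tau> - cnj \<tau>) * nct_int (nct_mult \<theta> p (nct_mult \<theta> F E))"
      unfolding diff mult_lin_right[OF lEF lFE lp] by (simp add: nct_int_def)
    also have "nct_mult \<theta> p (nct_mult \<theta> E F) = nct_mult \<theta> (nct_mult \<theta> p E) F"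
      by (rule mult_assoc[OF lp lE lF, symmetric])
    also have "nct_mult \<theta> p (nct_mult \<theta> F E) = nct_mult \<theta> (nct_mult \<theta> p F) E"
      by (rule mult_assoc[OF lp lF lE, symmetric])
    finally have "nct_int (nct_mult \<theta> p (\<lambda>k. nct_mult \<theta> A B k - nct_mult \<theta> B A k)) = (cnj \<tau> - \<tau>) * X + (\<tau> - cnj \<tau>) * Y"
      unfolding X_def Y_def .
    then have "psi \<theta> p = - (1 / (2 * pi * \<i>)) * ((cnj \<tau> - \<tau>) * X + (\<tau> - cnj \<tau>) * Y)"
      by (simp add: psi_def A_def B_def)
    then show ?thesis using psi_alg[OF tau] by simp
  qed
  define x where "x = Re X"
  define y where "y = Re Y"
  define c where "c = Im \<tau> / pi"
  have c0: "c > 0" using tau by (simp add: c_def)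
  have Xx: "X = of_real x" and x0: "x \<ge> 0" using X0 by (auto simp: x_def less_eq_complex_def complex_eq_iff)
  have Yy: "Y = of_real y" and y0: "y \<ge> 0" using Y0 by (auto simp: y_def less_eq_complex_def complex_eq_iff)
  have S': "S_tau \<tau> \<theta> p = of_real (2 * c * (x + y))" unfolding S Xx Yy c_def[symmetric] by (simp add: algebra_simps)
  have P': "psi \<theta> p = of_real (c * (x - y))" unfolding psi Xx Yy c_def[symmetric] by simp
  have cm: "cmod (psi \<theta> p) = c * \<bar>x - y\<bar>" unfolding P' norm_of_real using c0 by (simp add: abs_mult)
  have part1: "Im (S_tau \<tau> \<theta> p) = 0" unfolding S' by simp
  have part2: "Re (S_tau \<tau> \<theta> p) \<ge> 2 * cmod (psi \<theta> p)"
    unfolding S' cm using c0 x0 y0 by (simp add: abs_if mult_left_mono)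
  have Xz: "X = 0" if "nct_mult \<theta> F p = (\<lambda>_. 0) \<or> nct_mult \<theta> p E = (\<lambda>_. 0)"
    using that
  proof
    assume "nct_mult \<theta> F p = (\<lambda>_. 0)"
    then show "X = 0" unfolding Xpos by (simp add: nct_int_def)
  next
    assume "nct_mult \<theta> p E = (\<lambda>_. 0)"
    then show "X = 0" unfolding X_def by (simp add: nct_int_def)
  qed
  have Yz: "Y = 0" if "nct_mult \<theta> E p = (\<lambda>_. 0) \<or> nct_mult \<theta> p F = (\<lambda>_. 0)"
    using that
  proof
    assume "nct_mult \<theta> E p = (\<lambda>_. 0)"
    then show "Y = 0" unfolding Ypos by (simp add: nct_int_def)
  next
    assume "nct_mult \<theta> p F = (\<lambda>_. 0)"
    then show "Y = 0" unfolding Y_def by (simp add: nct_int_def)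
  qed
  have part3: "S_tau \<tau> \<theta> p = of_real (2 * cmod (psi \<theta> p))"
    if "nct_mult \<theta> F p = (\<lambda>_. 0) \<or> nct_mult \<theta> p E = (\<lambda>_. 0) \<or> nct_mult \<theta> E p = (\<lambda>_. 0) \<or> nct_mult \<theta> p F = (\<lambda>_. 0)"
  proof -
    have "x = 0 \<or> y = 0" using that Xz Yz Xx Yy by auto
    then show ?thesis unfolding S' cm using x0 y0 c0 by (auto simp: algebra_simps)
  qed
  show ?thesis using part1 part2 part3 unfolding E_def F_def by blast
qed

end
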